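(* For all $P,Q\in\mathbf{R}^3$, $\rho_t(P,Q)\to d_E(P,Q)$ as $t$ increases to $1$ (i.e. $\lim_{t\to 1^-}\rho_t(P,Q)=d_E(P,Q)$).
   Context: $d_E$ denotes the Euclidean metric on $\mathbf{R}^3$. For $0<t\leq 1$ let $\alpha=\sin^{-1}\!\left(\frac{\sqrt{2-t^2}-t}{2}\right)$. For $X,Y\in\mathbf{R}^3$ with $d_E(X,Y)\leq 2$, choose a sphere of radius $1$ with center $C$ containing $X$ and $Y$, let $X'=2C-X$, and define $$d_t(X,Y)=\begin{cases} d_E(X,Y) & \text{if } \angle XCY\leq \pi-2\alpha,\\ 2t+d_E(X',Y) & \text{if } \angle XCY>\pi-2\alpha,\end{cases}$$ which depends only on $s=d_E(X,Y)$ (since $\angle XCY=2\sin^{-1}(s/2)$ and $d_E(X',Y)=\sqrt{4-s^2}$). For $P,Q\in\mathbf{R}^3$ let $\Gamma_{P,Q}$ be the set of finite sequences $(X_0,\dots,X_n)$, $n\in\mathbf{N}$, in $\mathbf{R}^3$ with $X_0=P$, $X_n=Q$, $d_E(X_{i-1},X_i)\leq 2$ for $1\leq i\leq n$, and $$\rho_t(P,Q)=\inf_{(X_0,\dots,X_n)\in\Gamma_{P,Q}}\sum_{i=1}^n d_t(X_{i-1},X_i).$$ *)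

theory Defs
  imports "HOL-Analysis.Analysis"
begin

definition alpha_t :: "real \<Rightarrow> real" where
  "alpha_t t = arcsin ((sqrt (2 - t\<^sup>2) - t) / 2)"

text \<open>d_t(X,Y) for d_E(X,Y) \<le> 2, expressed through s = d_E(X,Y):
  the angle XCY equals 2 arcsin(s/2) and d_E(X',Y) = sqrt(4 - s^2).\<close>
definition d_t :: "real \<Rightarrow> real^3 \<Rightarrow> real^3 \<Rightarrow> real" where
  "d_t t X Y = (let s = dist X Y in
      if 2 * arcsin (s / 2) \<le> pi - 2 * alpha_t t then s
      else 2 * t + sqrt (4 - s\<^sup>2))"

definition Gamma :: "real^3 \<Rightarrow> real^3 \<Rightarrow> ((nat \<Rightarrow> real^3) \<times> nat) set" where
  "Gamma P Q = {(X, n). X 0 = P \<and> X n = Q \<and> (\<forall>i\<in>{1..n}. dist (X (i - 1)) (X i) \<le> 2)}"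

definition rho_t :: "real \<Rightarrow> real^3 \<Rightarrow> real^3 \<Rightarrow> real" where
  "rho_t t P Q = Inf ((\<lambda>(X, n). \<Sum>i=1..n. d_t t (X (i - 1)) (X i)) ` Gamma P Q)"

end

theory Submission
  imports Defs
begin

lemma dt_lower:
  assumes "0 < t" "t \<le> 1" "dist X Y \<le> 2"
  shows "t * dist X Y \<le> d_t t X Y"
proof -
  have "t * dist X Y \<le> dist X Y" using assms by (simp add: mult_left_le_one_le)
  moreover have "t * dist X Y \<le> 2 * t + sqrt (4 - (dist X Y)\<^sup>2)"
  proof -
    have "t * dist X Y \<le> t * 2" using assms by (intro mult_left_mono) auto
    moreover have "(dist X Y)\<^sup>2 \<le> 2\<^sup>2" using assms by (intro power_mono) auto
    hence "0 \<le> sqrt (4 - (dist X Y)\<^sup>2)" by simp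
    ultimately show ?thesis by linarith
  qed
  ultimately show ?thesis unfolding d_t_def Let_def by auto
qed

lemma dt_small:
  assumes "0 < t" "t \<le> 1" "dist X Y \<le> 1"
  shows "d_t t X Y = dist X Y"
proof -
  define v where "v = (sqrt (2 - t\<^sup>2) - t) / 2"
  have s2: "sin (pi/4) = sqrt 2 / 2" by (simp add: sin_45)
  have a4: "arcsin (sqrt 2 / 2) = pi/4"
    using arcsin_sin[of "pi/4"] s2 by simp
  have sq2: "1 \<le> sqrt 2" by simp
  have "sqrt (2 - t\<^sup>2) \<le> sqrt 2" using assms by (intro real_sqrt_le_mono) auto
  hence "sqrt (2 - t\<^sup>2) - t \<le> sqrt 2" using assms by linarith
  hence v1: "v \<le> sqrt 2 / 2" unfolding v_def by (intro divide_right_mono) auto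
  have "t\<^sup>2 \<le> 1" using assms by (intro power_le_one) auto
  hence "0 \<le> sqrt (2 - t\<^sup>2)" by simp
  hence "-2 \<le> sqrt (2 - t\<^sup>2) - t" using assms by linarith
  hence v0: "-1 \<le> v" unfolding v_def by simp
  have "sqrt 2 / 2 \<le> 1"
    using real_sqrt_le_mono[of 2 4] by simp
  hence "arcsin v \<le> pi/4" using arcsin_le_arcsin[of v "sqrt 2 / 2"] v0 v1 a4 by simp
  hence al: "alpha_t t \<le> pi/4" unfolding alpha_t_def v_def by simp
  have "dist X Y / 2 \<le> sqrt 2 / 2" using assms sq2 by (intro divide_right_mono) linarith+
  moreover have "-1 \<le> dist X Y / 2" using zero_le_dist[of X Y] by linarith
  ultimately have "arcsin (dist X Y / 2) \<le> pi/4"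
    using arcsin_le_arcsin[of "dist X Y / 2" "sqrt 2 / 2"] a4 \<open>sqrt 2 / 2 \<le> 1\<close> by simp
  hence "2 * arcsin (dist X Y / 2) \<le> pi - 2 * alpha_t t" using al by simp
  thus ?thesis unfolding d_t_def Let_def by simp
qed

lemma chain_dist:
  fixes X :: "nat \<Rightarrow> real^3"
  shows "dist (X 0) (X n) \<le> (\<Sum>i=1..n. dist (X (i - 1)) (X i))"
proof (induction n)
  case 0 then show ?case by simp
next
  case (Suc n)
  have "dist (X 0) (X (Suc n)) \<le> dist (X 0) (X n) + dist (X n) (X (Suc n))"
    by (rule dist_triangle)
  also have "\<dots> \<le> (\<Sum>i=1..n. dist (X (i - 1)) (X i)) + dist (X n) (X (Suc n))"
    using Suc by simp
  also have "\<dots> = (\<Sum>i=1..Suc n. dist (X (i - 1)) (X i))"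
    by (simp add: sum.atLeast1_atMost_eq sum.nat_ivl_Suc')
  finally show ?case .
qed

lemma rho_bounds:
  fixes P Q :: "real^3"
  assumes "0 < t" "t \<le> 1"
  shows "t * dist P Q \<le> rho_t t P Q" "rho_t t P Q \<le> dist P Q"
proof -
  let ?f = "(\<lambda>(X, n). \<Sum>i=1..n. d_t t (X (i - 1)) (X i))"
  have low: "t * dist P Q \<le> ?f c" if "c \<in> Gamma P Q" for c
  proof -
    obtain X n where c: "c = (X, n)" by (cases c)
    have g: "X 0 = P" "X n = Q" "\<And>i. i \<in> {1..n} \<Longrightarrow> dist (X (i - 1)) (X i) \<le> 2"
      using that c unfolding Gamma_def by auto
    have "t * dist P Q \<le> t * (\<Sum>i=1..n. dist (X (i - 1)) (X i))"
      using chain_dist[of X n] g assms by (intro mult_left_mono) auto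
    also have "\<dots> = (\<Sum>i=1..n. t * dist (X (i - 1)) (X i))" by (simp add: sum_distrib_left)
    also have "\<dots> \<le> (\<Sum>i=1..n. d_t t (X (i - 1)) (X i))"
      by (intro sum_mono dt_lower assms g(3)) auto
    finally show ?thesis using c by simp
  qed
  define n :: nat where "n = nat (ceiling (dist P Q)) + 1"
  define X where "X = (\<lambda>i::nat. P + (real i / real n) *\<^sub>R (Q - P))"
  have "n \<ge> 1" unfolding n_def by simp
  hence npos: "real n > 0" by simp
  have nge: "dist P Q \<le> real n" unfolding n_def by linarith
  have step: "dist (X (i - 1)) (X i) = dist P Q / real n" if "i \<in> {1..n}" for i
  proof -
    have i1: "1 \<le> i" using that by simp
    have e: "real i / real n - real (i - 1) / real n = 1 / real n"
      using i1 by (simp add: of_nat_diff diff_divide_distrib[symmetric])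
    have "X i - X (i - 1) = (real i / real n) *\<^sub>R (Q - P) - (real (i - 1) / real n) *\<^sub>R (Q - P)"
      unfolding X_def by simp
    also have "\<dots> = (real i / real n - real (i - 1) / real n) *\<^sub>R (Q - P)"
      by (simp only: scaleR_diff_left)
    also have "\<dots> = (1 / real n) *\<^sub>R (Q - P)" by (simp only: e)
    finally have d: "X i - X (i - 1) = (1 / real n) *\<^sub>R (Q - P)" .
    have "dist (X (i - 1)) (X i) = norm ((1 / real n) *\<^sub>R (Q - P))"
      by (simp only: dist_norm norm_minus_commute[of "X (i - 1)"] d)
    also have "\<dots> = dist P Q / real n" using npos by (simp add: dist_norm norm_minus_commute)
    finally show ?thesis .
  qed
  have stepl: "dist P Q / real n \<le> 1" using nge npos by simp
  have X0: "X 0 = P" unfolding X_def by simp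
  have Xn: "X n = Q" unfolding X_def using npos by simp
  have XG: "(X, n) \<in> Gamma P Q"
    unfolding Gamma_def using step stepl X0 Xn by auto
  have "?f (X, n) = (\<Sum>i=1..n. d_t t (X (i - 1)) (X i))" by simp
  also have "\<dots> = (\<Sum>i=1..n. dist P Q / real n)"
  proof (rule sum.cong[OF refl])
    fix i assume i: "i \<in> {1..n}"
    show "d_t t (X (i - 1)) (X i) = dist P Q / real n"
      using dt_small[OF assms, of "X (i - 1)" "X i"] step[OF i] stepl by simp
  qed
  also have "\<dots> = dist P Q" using npos by simp
  finally have fX: "?f (X, n) = dist P Q" .
  have bdd: "bdd_below (?f ` Gamma P Q)"
    by (rule bdd_belowI[of _ "t * dist P Q"]) (use low in auto)
  show "rho_t t P Q \<le> dist P Q"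
    unfolding rho_t_def using cInf_lower[OF imageI[OF XG] bdd] fX by simp
  show "t * dist P Q \<le> rho_t t P Q"
    unfolding rho_t_def using XG low by (intro cInf_greatest) auto
qed

theorem mainTheorem5:
  fixes P Q :: "real^3"
  shows "((\<lambda>t. rho_t t P Q) \<longlongrightarrow> dist P Q) (at_left 1)"
proof (rule tendsto_sandwich[where f = "\<lambda>t. t * dist P Q" and h = "\<lambda>t. dist P Q"])
  have ev: "\<forall>\<^sub>F t in at_left (1::real). 0 < t \<and> t \<le> 1"
    using eventually_at_left_real[of 0 1] by (auto elim: eventually_mono)
  show "\<forall>\<^sub>F t in at_left 1. t * dist P Q \<le> rho_t t P Q"
    using ev by eventually_elim (use rho_bounds in auto)
  show "\<forall>\<^sub>F t in at_left 1. rho_t t P Q \<le> dist P Q"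
    using ev by eventually_elim (use rho_bounds in auto)
  show "((\<lambda>t. t * dist P Q) \<longlongrightarrow> dist P Q) (at_left 1)"
    using tendsto_mult[OF tendsto_ident_at[of 1 "{..<1}"] tendsto_const[of "dist P Q"]]
    by (simp add: at_left_eq)
  show "((\<lambda>t. dist P Q) \<longlongrightarrow> dist P Q) (at_left 1)" by simp
qed

end
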